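(* Let $G$ be a finite simple undirected graph with property S. Then $G$ is a $\mathcal{P}$-position of Graph Nimors (i.e. the player not to move has a winning strategy, equivalently its Nim value is $0$) if and only if $G$ has an even number of edges.
   Context: Graph Nimors is a two-player impartial game played on a finite simple undirected graph. A move consists of either deleting one edge, or contracting one edge $uv$: removing the adjacent vertices $u,v$ and inserting a new vertex $w$ adjacent to every vertex (other than $u,v$) that was adjacent to $u$ or to $v$ (so the result is again simple). Players alternate; when no edges remain no move is possible, and the player who made the last move wins (normal play). A position is a $\mathcal{P}$-position if the previous player (the one not about to move) can force a win, and an $\mathcal{N}$-position if the next player to move can force a win. The blocks of a graph are its maximal biconnected subgraphs, where a single edge not on any cycle also counts as a block; the edges of a graph are partitioned among its blocks. A graph $G$ has property S if it contains no edge both of whose endpoints have degree greater than two, and no block of $G$ is a triangle (a 3-cycle). *)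

theory Defs
  imports Main
begin

type_synonym 'a graph = "'a set \<times> 'a set set"

definition simple_graph :: "'a graph \<Rightarrow> bool" where
  "simple_graph G \<longleftrightarrow> finite (fst G) \<and>
     (\<forall>e\<in>snd G. \<exists>u v. u \<noteq> v \<and> u \<in> fst G \<and> v \<in> fst G \<and> e = {u, v})"

definition degree :: "'a set set \<Rightarrow> 'a \<Rightarrow> nat" where
  "degree E x = card {e\<in>E. x \<in> e}"

text \<open>Moves of Graph Nimors. Contracting the edge uv: the new vertex w is represented
  by reusing the name u (the result is isomorphic to the one with a fresh vertex).\<close>

definition delete_edge :: "'a graph \<Rightarrow> 'a set \<Rightarrow> 'a graph" where
  "delete_edge G e = (fst G, snd G - {e})"

definition contract_edge :: "'a graph \<Rightarrow> 'a \<Rightarrow> 'a \<Rightarrow> 'a graph" where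
  "contract_edge G u v =
     (fst G - {v},
      {e\<in>snd G. v \<notin> e} \<union> {{u, x} | x. {v, x} \<in> snd G \<and> x \<noteq> u})"

definition nimors_move :: "'a graph \<Rightarrow> 'a graph \<Rightarrow> bool" where
  "nimors_move G G' \<longleftrightarrow>
     (\<exists>e\<in>snd G. G' = delete_edge G e) \<or>
     (\<exists>u v. u \<noteq> v \<and> {u, v} \<in> snd G \<and> G' = contract_edge G u v)"

text \<open>Since every move removes at least one edge the game is
  finite, so the least fixed point below is the usual recursive characterisation:
  a position is a P-position iff every move leads to a position from which some move
  reaches a P-position (i.e. every move leads to an N-position).\<close>

inductive P_position :: "'a graph \<Rightarrow> bool" where
  "(\<And>G'. nimors_move G G' \<Longrightarrow> \<exists>G''. nimors_move G' G'' \<and> P_position G'') \<Longrightarrow> P_position G"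

definition edge_adj :: "'a set set \<Rightarrow> 'a \<Rightarrow> 'a \<Rightarrow> bool" where
  "edge_adj F x y \<longleftrightarrow> {x, y} \<in> F"

definition connected_edges :: "'a set set \<Rightarrow> 'a set \<Rightarrow> bool" where
  "connected_edges F W \<longleftrightarrow> (\<forall>x\<in>W. \<forall>y\<in>W. (edge_adj F)\<^sup>*\<^sup>* x y)"

definition nonseparable :: "'a set set \<Rightarrow> bool" where
  "nonseparable F \<longleftrightarrow> F \<noteq> {} \<and> connected_edges F (\<Union>F) \<and>
     (\<forall>z\<in>\<Union>F. connected_edges {e\<in>F. z \<notin> e} (\<Union>F - {z}))"

definition is_block :: "'a set set \<Rightarrow> 'a set set \<Rightarrow> bool" where
  "is_block E F \<longleftrightarrow> F \<subseteq> E \<and> nonseparable F \<and>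
     (\<forall>F'. F \<subseteq> F' \<and> F' \<subseteq> E \<and> nonseparable F' \<longrightarrow> F' = F)"

definition is_triangle :: "'a set set \<Rightarrow> bool" where
  "is_triangle F \<longleftrightarrow> (\<exists>a b c. a \<noteq> b \<and> b \<noteq> c \<and> a \<noteq> c \<and> F = {{a, b}, {b, c}, {a, c}})"

definition property_S :: "'a graph \<Rightarrow> bool" where
  "property_S G \<longleftrightarrow>
     (\<forall>u v. {u, v} \<in> snd G \<longrightarrow> \<not> (degree (snd G) u > 2 \<and> degree (snd G) v > 2)) \<and>
     \<not> (\<exists>F. is_block (snd G) F \<and> is_triangle F)"

end

theory Submission
  imports Defs
begin

definition Sp :: "'a set set \<Rightarrow> bool" where
  "Sp E \<longleftrightarrow> (\<forall>a b. {a,b} \<in> E \<longrightarrow> \<not> (degree E a > 2 \<and> degree E b > 2)) \<and>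
     \<not> (\<exists>a b c. a \<noteq> b \<and> b \<noteq> c \<and> a \<noteq> c \<and> {a,b} \<in> E \<and> {b,c} \<in> E \<and> {a,c} \<in> E)"

lemma simple_finite: "simple_graph G \<Longrightarrow> finite (snd G)"
proof -
  assume a: "simple_graph G"
  have "snd G \<subseteq> Pow (fst G)" using a unfolding simple_graph_def by auto
  moreover have "finite (fst G)" using a unfolding simple_graph_def by auto
  ultimately show ?thesis by (meson finite_Pow_iff finite_subset)
qed

lemma simple_edge: "simple_graph G \<Longrightarrow> e \<in> snd G \<Longrightarrow> \<exists>p q. p \<noteq> q \<and> p \<in> fst G \<and> q \<in> fst G \<and> e = {p,q}"
  unfolding simple_graph_def by blast

lemma doubleton_inj: "inj (\<lambda>x. {v, x})"
  by (auto simp: inj_def doubleton_eq_iff)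

definition nbr :: "'a set set \<Rightarrow> 'a \<Rightarrow> 'a set" where
  "nbr E v = {x. {v,x} \<in> E}"

lemma edges_at: "simple_graph G \<Longrightarrow> {e \<in> snd G. v \<in> e} = (\<lambda>x. {v,x}) ` nbr (snd G) v"
  unfolding nbr_def
proof (rule set_eqI, rule iffI)
  fix e assume a: "simple_graph G" and e: "e \<in> {e \<in> snd G. v \<in> e}"
  then obtain p q where pq: "e = {p,q}" using simple_edge[OF a] by blast
  show "e \<in> (\<lambda>x. {v,x}) ` {x. {v,x} \<in> snd G}"
  proof (cases "p = v")
    case True then show ?thesis using e pq by auto
  next
    case False then have "q = v" using e pq by auto
    then show ?thesis using e pq by (auto simp: insert_commute)
  qed
qed auto

lemma degree_nbr: "simple_graph G \<Longrightarrow> degree (snd G) v = card (nbr (snd G) v)"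
  unfolding degree_def
  by (simp add: edges_at card_image inj_on_subset[OF doubleton_inj])

lemma finite_nbr: "finite E \<Longrightarrow> finite (nbr E v)"
proof -
  assume f: "finite E"
  have "(\<lambda>x. {v,x}) ` nbr E v \<subseteq> E" unfolding nbr_def by auto
  then have "finite ((\<lambda>x. {v,x}) ` nbr E v)" using f finite_subset by blast
  then show ?thesis using finite_imageD inj_on_subset[OF doubleton_inj subset_UNIV] by metis
qed

lemma simple_delete: "simple_graph G \<Longrightarrow> simple_graph (delete_edge G e)"
  unfolding simple_graph_def delete_edge_def by auto

lemma simple_contract: "simple_graph G \<Longrightarrow> u \<noteq> v \<Longrightarrow> {u,v} \<in> snd G \<Longrightarrow> simple_graph (contract_edge G u v)"
proof -
  assume a: "simple_graph G" and uv: "u \<noteq> v" "{u,v} \<in> snd G"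
  have u: "u \<in> fst G" using simple_edge[OF a uv(2)] by (auto simp: doubleton_eq_iff)
  have h1: "\<exists>p q. p \<noteq> q \<and> p \<in> fst G - {v} \<and> q \<in> fst G - {v} \<and> e = {p,q}"
    if "e \<in> snd G" "v \<notin> e" for e
    using simple_edge[OF a that(1)] that(2) by blast
  have h2: "\<exists>p q. p \<noteq> q \<and> p \<in> fst G - {v} \<and> q \<in> fst G - {v} \<and> {u,x} = {p,q}"
    if h: "{v,x} \<in> snd G" "x \<noteq> u" for x
  proof -
    obtain p q where "p \<noteq> q" "p \<in> fst G" "q \<in> fst G" "{v,x} = {p,q}" using simple_edge[OF a h(1)] by blast
    then have "x \<in> fst G" "x \<noteq> v" by (auto simp: doubleton_eq_iff)
    then show ?thesis using u uv h(2) by blast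
  qed
  have fin: "finite (fst G - {v})" using a unfolding simple_graph_def by auto
  show ?thesis unfolding simple_graph_def contract_edge_def fst_conv snd_conv
  proof (intro conjI ballI fin)
    fix e assume "e \<in> {e \<in> snd G. v \<notin> e} \<union> {{u, x} |x. {v, x} \<in> snd G \<and> x \<noteq> u}"
    then consider "e \<in> snd G" "v \<notin> e" | x where "{v, x} \<in> snd G" "x \<noteq> u" "e = {u,x}" by blast
    then show "\<exists>p q. p \<noteq> q \<and> p \<in> fst G - {v} \<and> q \<in> fst G - {v} \<and> e = {p, q}"
    proof cases
      case 1 then show ?thesis using h1 by blast
    next
      case 2 then show ?thesis using h2 by blast
    qed
  qed
qed

lemma move_card: "finite (snd G) \<Longrightarrow> nimors_move G G' \<Longrightarrow> finite (snd G') \<and> card (snd G') < card (snd G)"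
proof -
  assume f: "finite (snd G)" and m: "nimors_move G G'"
  show ?thesis
  proof (cases "\<exists>e\<in>snd G. G' = delete_edge G e")
    case True
    then obtain e where "e \<in> snd G" "G' = delete_edge G e" by blast
    moreover then have "card (snd G) > 0" using f card_gt_0_iff by blast
    ultimately show ?thesis using f by (auto simp: delete_edge_def)
  next
    case False
    then obtain u v where uv: "u \<noteq> v" "{u,v} \<in> snd G" and G': "G' = contract_edge G u v"
      using m unfolding nimors_move_def by blast
    define E where "E = snd G"
    define A where "A = {e\<in>E. v \<notin> e}"
    define C where "C = {e\<in>E. v \<in> e}"
    define N where "N = nbr E v - {u}"
    have fA: "finite A" "finite C" using f unfolding A_def C_def E_def by auto
    have fN: "finite N" using finite_nbr[OF f] unfolding N_def E_def by auto
    have E': "snd G' \<subseteq> A \<union> (\<lambda>x. {u,x}) ` N"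
      unfolding G' contract_edge_def A_def N_def nbr_def E_def by auto
    have fin': "finite (snd G')" using finite_subset[OF E'] fA fN by blast
    have "card (snd G') \<le> card A + card ((\<lambda>x. {u,x}) ` N)"
    proof -
      have "card (snd G') \<le> card (A \<union> (\<lambda>x. {u,x}) ` N)" using card_mono[OF _ E'] fA fN by blast
      also have "\<dots> \<le> card A + card ((\<lambda>x. {u,x}) ` N)" by (rule card_Un_le)
      finally show ?thesis .
    qed
    also have "card ((\<lambda>x. {u,x}) ` N) \<le> card N" using card_image_le fN by blast
    also have "card N = card ((\<lambda>x. {v,x}) ` N)"
      using card_image[OF inj_on_subset[OF doubleton_inj, of N v]] by simp
    also have "card ((\<lambda>x. {v,x}) ` N) \<le> card (C - {{u,v}})"
    proof -
      have "(\<lambda>x. {v,x}) ` N \<subseteq> C - {{u,v}}"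
        using uv unfolding N_def C_def nbr_def by (auto simp: doubleton_eq_iff)
      moreover have "finite (C - {{u,v}})" using fA by simp
      ultimately show ?thesis by (simp add: card_mono)
    qed
    also have "card (C - {{u,v}}) = card C - 1" using uv unfolding C_def E_def by auto
    also have "card A + (card C - 1) < card E"
    proof -
      have "E = A \<union> C" "A \<inter> C = {}" unfolding A_def C_def by auto
      then have "card E = card A + card C" using fA card_Un_disjoint by metis
      moreover have "card C > 0" using fA uv unfolding C_def E_def by (auto simp: card_gt_0_iff)
      ultimately show ?thesis by linarith
    qed
    finally show ?thesis using fin' unfolding E_def by simp
  qed
qed

lemma P_elim: "P_position G \<Longrightarrow> nimors_move G G' \<Longrightarrow> \<exists>G''. nimors_move G' G'' \<and> P_position G''"
  by (erule P_position.cases) blast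

lemma P_not_P: "finite (snd G) \<Longrightarrow> P_position G \<Longrightarrow> nimors_move G G' \<Longrightarrow> \<not> P_position G'"
proof (induction "card (snd G)" arbitrary: G G' rule: less_induct)
  case less
  show ?case
  proof
    assume "P_position G'"
    obtain G'' where "nimors_move G' G''" "P_position G''" using P_elim less.prems by blast
    moreover have "finite (snd G')" "card (snd G') < card (snd G)" using move_card less.prems by blast+
    ultimately show False using less.hyps \<open>P_position G'\<close> by blast
  qed
qed


lemma degree_mono: "finite E \<Longrightarrow> F \<subseteq> E \<Longrightarrow> degree F x \<le> degree E x"
  unfolding degree_def by (rule card_mono) auto

lemma Sp_sub: "finite E \<Longrightarrow> Sp E \<Longrightarrow> F \<subseteq> E \<Longrightarrow> Sp F"
proof -
  assume f: "finite E" and S: "Sp E" and F: "F \<subseteq> E"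
  have d: "degree F x \<le> degree E x" for x using degree_mono[OF f F] .
  show ?thesis unfolding Sp_def
  proof (intro conjI allI impI notI)
    fix a b assume "{a,b} \<in> F" "2 < degree F a \<and> 2 < degree F b"
    then show False using S F d[of a] d[of b] unfolding Sp_def by fastforce
  next
    assume "\<exists>a b c. a \<noteq> b \<and> b \<noteq> c \<and> a \<noteq> c \<and> {a, b} \<in> F \<and> {b, c} \<in> F \<and> {a, c} \<in> F"
    then show False using S F unfolding Sp_def by blast
  qed
qed

lemma img_inv: "(\<And>z. h (h z) = z) \<Longrightarrow> h ` (h ` X) = X"
  by (simp add: image_image)

lemma mem_img: "(\<And>z. h (h z) = z) \<Longrightarrow> (X \<in> image h ` E) = (h ` X \<in> E)"
proof
  assume inv: "\<And>z. h (h z) = z" and "X \<in> image h ` E"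
  then obtain e where "e \<in> E" "X = h ` e" by blast
  then show "h ` X \<in> E" using img_inv[of h e, OF inv] by simp
next
  assume inv: "\<And>z. h (h z) = z" and "h ` X \<in> E"
  then show "X \<in> image h ` E" using img_inv[of h X, OF inv] by (metis image_eqI)
qed

lemma inj_img: "(\<And>z. h (h z) = z) \<Longrightarrow> inj (image h)"
  by (metis img_inv injI)

lemma degree_img: "(\<And>z. h (h z) = z) \<Longrightarrow> degree (image h ` E) a = degree E (h a)"
proof -
  assume inv: "\<And>z. h (h z) = z"
  have "{X \<in> image h ` E. a \<in> X} = image h ` {e \<in> E. h a \<in> e}"
  proof (rule set_eqI, rule iffI)
    fix X assume X: "X \<in> {X \<in> image h ` E. a \<in> X}"
    then have "h ` X \<in> {e \<in> E. h a \<in> e}" using mem_img[of h, OF inv] by auto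
    moreover have "X = h ` (h ` X)" using img_inv[of h X, OF inv] by simp
    ultimately show "X \<in> image h ` {e \<in> E. h a \<in> e}" by blast
  next
    fix X assume "X \<in> image h ` {e \<in> E. h a \<in> e}"
    then obtain e where "e \<in> E" "h a \<in> e" "X = h ` e" by blast
    then show "X \<in> {X \<in> image h ` E. a \<in> X}" using inv by (metis (mono_tags, lifting) image_eqI mem_Collect_eq)
  qed
  then show ?thesis unfolding degree_def
    using card_image[OF inj_on_subset[OF inj_img[of h, OF inv] subset_UNIV]] by simp
qed

lemma Sp_img: "(\<And>z. h (h z) = z) \<Longrightarrow> Sp E \<Longrightarrow> Sp (image h ` E)"
proof -
  assume inv: "\<And>z. h (h z) = z" and S: "Sp E"
  have m: "({a,b} \<in> image h ` E) = ({h a, h b} \<in> E)" for a b using mem_img[of h, OF inv] by simp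
  have d: "degree (image h ` E) a = degree E (h a)" for a using degree_img[of h, OF inv] .
  have i: "h a = h b \<longleftrightarrow> a = b" for a b using inv by metis
  show ?thesis unfolding Sp_def m d i
  proof (intro conjI allI impI notI)
    fix a b assume "{h a, h b} \<in> E" "2 < degree E (h a) \<and> 2 < degree E (h b)"
    then show False using S unfolding Sp_def by blast
  next
    assume "\<exists>a b c. a \<noteq> b \<and> b \<noteq> c \<and> a \<noteq> c \<and> {h a, h b} \<in> E \<and> {h b, h c} \<in> E \<and> {h a, h c} \<in> E"
    then show False using S i unfolding Sp_def by metis
  qed
qed

lemma Sp_propS: "Sp (snd G) \<Longrightarrow> property_S G"
  unfolding Sp_def property_S_def is_block_def is_triangle_def by blast


lemma conn: "(\<And>x y. x \<in> W \<Longrightarrow> y \<in> W \<Longrightarrow> x \<noteq> y \<Longrightarrow> {x,y} \<in> F) \<Longrightarrow> connected_edges F W"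
  unfolding connected_edges_def edge_adj_def
  by (metis (mono_tags, lifting) r_into_rtranclp rtranclp.rtrancl_refl)

lemma edges_two:
  assumes f: "finite E" and ab: "{a,b} \<in> E" and ac: "{a,c} \<in> E" and bc: "b \<noteq> c"
    and d: "degree E a \<le> 2"
  shows "e \<in> E \<Longrightarrow> a \<in> e \<Longrightarrow> e = {a,b} \<or> e = {a,c}"
proof -
  assume e: "e \<in> E" "a \<in> e"
  have sub: "{{a,b},{a,c}} \<subseteq> {e \<in> E. a \<in> e}" using ab ac by auto
  have "card {{a,b},{a,c}} = 2" using bc by (auto simp: doubleton_eq_iff)
  then have "card {e \<in> E. a \<in> e} \<le> card {{a,b},{a,c}}" using d unfolding degree_def by simp
  then have "{{a,b},{a,c}} = {e \<in> E. a \<in> e}" using card_seteq[OF _ sub] f by simp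
  then show ?thesis using e by blast
qed

lemma tri_block:
  assumes sg: "simple_graph G" and ab: "{a,b} \<in> snd G" and bc: "{b,c} \<in> snd G" and ac: "{a,c} \<in> snd G"
    and dist: "a \<noteq> b" "b \<noteq> c" "a \<noteq> c"
    and da: "degree (snd G) a \<le> 2" and db: "degree (snd G) b \<le> 2"
  shows "is_block (snd G) {{a,b},{b,c},{a,c}}"
proof -
  define E where "E = snd G"
  define T where "T = {{a,b},{b,c},{a,c}}"
  have f: "finite E" using simple_finite[OF sg] unfolding E_def .
  have ea: "e \<in> E \<Longrightarrow> a \<in> e \<Longrightarrow> e = {a,b} \<or> e = {a,c}" for e
    using edges_two[OF f _ _ dist(2), of a e] ab ac da unfolding E_def by blast
  have eb: "e \<in> E \<Longrightarrow> b \<in> e \<Longrightarrow> e = {a,b} \<or> e = {b,c}" for e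
    using edges_two[OF f _ _ dist(3), of b e] ab bc db unfolding E_def by (simp add: insert_commute)
  have UT: "\<Union>T = {a,b,c}" unfolding T_def by auto
  have nsT: "nonseparable T" unfolding nonseparable_def UT
  proof (intro conjI ballI)
    show "T \<noteq> {}" unfolding T_def by simp
    show "connected_edges T {a,b,c}" by (rule conn) (auto simp: T_def insert_commute)
    fix z assume "z \<in> {a,b,c}"
    then show "connected_edges {e \<in> T. z \<notin> e} ({a,b,c} - {z})"
      using dist by (intro conn) (auto simp: T_def insert_commute)
  qed
  have max: "F' = T" if F': "T \<subseteq> F'" "F' \<subseteq> E" "nonseparable F'" for F'
  proof (rule ccontr)
    assume "F' \<noteq> T"
    then obtain e where e: "e \<in> F'" "e \<notin> T" using F'(1) by blast
    then have eE: "e \<in> E" using F'(2) by blast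
    then obtain p q where pq: "p \<noteq> q" "e = {p,q}" using simple_edge[OF sg] unfolding E_def by blast
    have nab: "a \<notin> e" "b \<notin> e" using ea[OF eE] eb[OF eE] e(2) unfolding T_def by auto
    obtain y where y: "y \<in> e" "y \<noteq> c" using pq by blast
    have yU: "y \<in> \<Union>F' - {c}" using y e by blast
    have aU: "a \<in> \<Union>F' - {c}" using F'(1) dist unfolding T_def by blast
    have cU: "c \<in> \<Union>F'" using F'(1) unfolding T_def by blast
    have "connected_edges {e \<in> F'. c \<notin> e} (\<Union>F' - {c})" using F'(3) cU unfolding nonseparable_def by blast
    then have r: "(edge_adj {e \<in> F'. c \<notin> e})\<^sup>*\<^sup>* a y" using yU aU unfolding connected_edges_def by blast
    have "y \<in> {a,b}" using r
    proof (induction rule: rtranclp_induct)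
      case base then show ?case by simp
    next
      case (step x z)
      then have xz: "{x,z} \<in> E" "c \<notin> {x,z}" using F'(2) unfolding edge_adj_def by auto
      show ?case
      proof (cases "x = a")
        case True then show ?thesis using ea[OF xz(1)] xz(2) dist by (auto simp: doubleton_eq_iff)
      next
        case False then have "x = b" using step by simp
        then show ?thesis using eb[OF xz(1)] xz(2) dist by (auto simp: doubleton_eq_iff)
      qed
    qed
    then show False using nab y by blast
  qed
  show ?thesis unfolding is_block_def E_def[symmetric] T_def[symmetric]
    using nsT max ab bc ac unfolding T_def E_def by blast
qed

lemma propS_Sp: "simple_graph G \<Longrightarrow> property_S G \<Longrightarrow> Sp (snd G)"
proof -
  assume sg: "simple_graph G" and S: "property_S G"
  have dg: "\<not> (degree (snd G) u > 2 \<and> degree (snd G) v > 2)" if "{u,v} \<in> snd G" for u v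
    using S that unfolding property_S_def by blast
  have nb: "\<not> is_block (snd G) {{a,b},{b,c},{a,c}}" if "a \<noteq> b" "b \<noteq> c" "a \<noteq> c" for a b c
    using S that unfolding property_S_def is_triangle_def by blast
  show ?thesis unfolding Sp_def
  proof (intro conjI allI impI notI)
    fix a b assume "{a,b} \<in> snd G" "2 < degree (snd G) a \<and> 2 < degree (snd G) b"
    then show False using dg by blast
  next
    assume "\<exists>a b c. a \<noteq> b \<and> b \<noteq> c \<and> a \<noteq> c \<and> {a, b} \<in> snd G \<and> {b, c} \<in> snd G \<and> {a, c} \<in> snd G"
    then obtain a b c where t: "a \<noteq> b" "b \<noteq> c" "a \<noteq> c" "{a, b} \<in> snd G" "{b, c} \<in> snd G" "{a, c} \<in> snd G"
      by blast
    have d1: "degree (snd G) a \<le> 2 \<or> degree (snd G) b \<le> 2" using dg[OF t(4)] by linarith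
    have d2: "degree (snd G) b \<le> 2 \<or> degree (snd G) c \<le> 2" using dg[OF t(5)] by linarith
    have d3: "degree (snd G) a \<le> 2 \<or> degree (snd G) c \<le> 2" using dg[OF t(6)] by linarith
    show False
    proof -
      { assume "degree (snd G) a \<le> 2" "degree (snd G) b \<le> 2"
        then have False using tri_block[OF sg t(4,5,6) t(1,2,3)] nb[OF t(1,2,3)] by blast }
      moreover
      { assume "degree (snd G) b \<le> 2" "degree (snd G) c \<le> 2"
        then have "is_block (snd G) {{b,c},{c,a},{b,a}}"
          using tri_block[OF sg t(5) _ _ t(2)] t by (simp add: insert_commute)
        then have False using nb[OF t(1,2,3)] by (simp add: insert_commute) }
      moreover
      { assume "degree (snd G) a \<le> 2" "degree (snd G) c \<le> 2"
        then have "is_block (snd G) {{a,c},{c,b},{a,b}}"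
          using tri_block[OF sg t(6) _ t(4)] t by (simp add: insert_commute)
        then have False using nb[OF t(1,2,3)] by (simp add: insert_commute) }
      ultimately show False using d1 d2 d3 by blast
    qed
  qed
qed


definition goal2 :: "'a set set \<Rightarrow> 'a set set \<Rightarrow> bool" where
  "goal2 E E' \<longleftrightarrow> (\<exists>f h F. f \<in> E' \<and> (\<forall>z. h (h z) = z) \<and> F \<subseteq> E \<and> card F + 2 = card E \<and> E' - {f} = image h ` F)"

lemma one_less:
  assumes f: "finite E" and inv: "\<And>z. h (h z) = z" and E0: "E0 \<subseteq> E" "card E0 + 1 = card E"
    and c: "card E \<ge> 2" and E': "E' = image h ` E0"
  shows "goal2 E E'"
proof -
  have "E0 \<noteq> {}" using E0 c by auto
  then obtain g where g: "g \<in> E0" by blast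
  have fE0: "finite E0" using f E0 finite_subset by blast
  have "E' - {h ` g} = image h ` (E0 - {g})"
    unfolding E' using inj_img[of h, OF inv] by (simp add: image_set_diff)
  moreover have "card (E0 - {g}) + 2 = card E" using E0 g fE0 c by (simp add: card_Diff_singleton)
  moreover have "h ` g \<in> E'" using g E' by blast
  moreover have "\<forall>z. h (h z) = z" using inv by blast
  moreover have "E0 - {g} \<subseteq> E" using E0 by blast
  ultimately show ?thesis unfolding goal2_def
    by (intro exI[of _ "h ` g"] exI[of _ h] exI[of _ "E0 - {g}"]) simp
qed

lemma img_eq: "(\<And>z. h (h z) = z) \<Longrightarrow> (\<And>X. X \<in> A \<Longrightarrow> h ` X \<in> F) \<Longrightarrow> (\<And>e. e \<in> F \<Longrightarrow> h ` e \<in> A) \<Longrightarrow> A = image h ` F"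
proof -
  assume inv: "\<And>z. h (h z) = z" and 1: "\<And>X. X \<in> A \<Longrightarrow> h ` X \<in> F" and 2: "\<And>e. e \<in> F \<Longrightarrow> h ` e \<in> A"
  show ?thesis
  proof (rule set_eqI, rule iffI)
    fix X assume "X \<in> A" then show "X \<in> image h ` F" using 1 img_inv[of h X, OF inv] by (metis image_eqI)
  next
    fix X assume "X \<in> image h ` F" then show "X \<in> A" using 2 by blast
  qed
qed

lemma nbr_cases: "finite N \<Longrightarrow> card N \<le> 2 \<Longrightarrow> u \<in> N \<Longrightarrow> N = {u} \<or> (\<exists>x. x \<noteq> u \<and> N = {u,x})"
proof -
  assume f: "finite N" and c: "card N \<le> 2" and u: "u \<in> N"
  have "card (N - {u}) \<le> 1" using c u f by (simp add: card_Diff_singleton)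
  show ?thesis
  proof (cases "N - {u} = {}")
    case True then show ?thesis using u by blast
  next
    case False
    then have "card (N - {u}) = 1" using \<open>card (N - {u}) \<le> 1\<close> f by (simp add: card_gt_0_iff le_antisym Suc_le_eq)
    then obtain x where x: "N - {u} = {x}" by (rule card_1_singletonE)
    then have "x \<noteq> u" "N = {u,x}" using u by auto
    then show ?thesis by blast
  qed
qed

definition sw :: "'a \<Rightarrow> 'a \<Rightarrow> 'a \<Rightarrow> 'a" where
  "sw u v z = (if z = u then v else if z = v then u else z)"

lemma sw_inv: "sw u v (sw u v z) = z"
  unfolding sw_def by auto

lemma sw_fix: "u \<notin> X \<Longrightarrow> v \<notin> X \<Longrightarrow> sw u v ` X = X"
  unfolding sw_def by auto

lemma tf: "Sp E \<Longrightarrow> {a,b} \<in> E \<Longrightarrow> {b,c} \<in> E \<Longrightarrow> {a,c} \<in> E \<Longrightarrow> a \<noteq> b \<Longrightarrow> b \<noteq> c \<Longrightarrow> a \<noteq> c \<Longrightarrow> False"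
  unfolding Sp_def by blast


lemma edge_at_cases: "simple_graph G \<Longrightarrow> e \<in> snd G \<Longrightarrow> v \<in> e \<Longrightarrow> \<exists>x. x \<in> nbr (snd G) v \<and> x \<noteq> v \<and> e = {v,x}"
proof -
  assume sg: "simple_graph G" and e: "e \<in> snd G" "v \<in> e"
  obtain x where "x \<in> nbr (snd G) v" "e = {v,x}" using edges_at[OF sg, of v] e by blast
  moreover have "x \<noteq> v" using simple_edge[OF sg e(1)] calculation by (auto simp: doubleton_eq_iff)
  ultimately show ?thesis by blast
qed

lemma contract_low_v:
  assumes sg: "simple_graph G" and S: "Sp (snd G)" and uv: "u \<noteq> v" "{u,v} \<in> snd G"
    and d: "degree (snd G) v \<le> 2" and c: "card (snd G) \<ge> 2"
  shows "goal2 (snd G) (snd (contract_edge G u v))"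
proof -
  define E where "E = snd G"
  have f: "finite E" using simple_finite[OF sg] unfolding E_def .
  have uN: "u \<in> nbr E v" using uv unfolding nbr_def E_def by (simp add: insert_commute)
  have cN: "card (nbr E v) \<le> 2" using d degree_nbr[OF sg, of v] unfolding E_def by simp
  have G': "snd (contract_edge G u v) = {e\<in>E. v \<notin> e} \<union> {{u,x} | x. {v,x} \<in> E \<and> x \<noteq> u}"
    unfolding contract_edge_def E_def by simp
  have at: "e \<in> E \<Longrightarrow> v \<in> e \<Longrightarrow> \<exists>x. x \<in> nbr E v \<and> x \<noteq> v \<and> e = {v,x}" for e
    using edge_at_cases[OF sg] unfolding E_def by blast
  consider "nbr E v = {u}" | x where "x \<noteq> u" "nbr E v = {u,x}"
    using nbr_cases[OF finite_nbr[OF f] cN uN] by blast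
  then show ?thesis
  proof cases
    case 1
    have "snd (contract_edge G u v) = image id ` (E - {{u,v}})"
    proof (rule img_eq)
      fix X assume "X \<in> snd (contract_edge G u v)"
      then show "id ` X \<in> E - {{u,v}}" unfolding G' using 1 uv unfolding nbr_def by auto
    next
      fix e assume e: "e \<in> E - {{u,v}}"
      have "v \<notin> e"
      proof
        assume "v \<in> e"
        then obtain x where "x \<in> nbr E v" "e = {v,x}" using at e by blast
        then show False using 1 e by (auto simp: insert_commute)
      qed
      then show "id ` e \<in> snd (contract_edge G u v)" unfolding G' using e by simp
    qed simp
    moreover have "card (E - {{u,v}}) + 1 = card E" using uv f c unfolding E_def by (simp add: card_Diff_singleton)
    ultimately show ?thesis using one_less[OF f, of id "E - {{u,v}}"] c unfolding E_def by auto
  next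
    case 2
    have vx: "{v,x} \<in> E" using 2 unfolding nbr_def by blast
    have xv: "x \<noteq> v" using at[OF vx] 2 by (metis doubleton_eq_iff insertI1 insert_commute) 
    have ux: "{u,x} \<notin> E" using tf[OF S, of u v x] uv vx 2 xv unfolding E_def by blast
    have "snd (contract_edge G u v) - {{u,x}} = image id ` (E - {{u,v},{v,x}})"
    proof (rule img_eq)
      fix X assume X: "X \<in> snd (contract_edge G u v) - {{u,x}}"
      then show "id ` X \<in> E - {{u,v},{v,x}}" unfolding G' using 2 uv unfolding nbr_def by auto
    next
      fix e assume e: "e \<in> E - {{u,v},{v,x}}"
      have "v \<notin> e"
      proof
        assume "v \<in> e"
        then obtain z where "z \<in> nbr E v" "e = {v,z}" using at e by blast
        then show False using 2 e by (auto simp: insert_commute)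
      qed
      moreover have "e \<noteq> {u,x}" using e ux by blast
      ultimately show "id ` e \<in> snd (contract_edge G u v) - {{u,x}}" unfolding G' using e by simp
    qed simp
    moreover have "card (E - {{u,v},{v,x}}) + 2 = card E"
    proof -
      have "{{u,v},{v,x}} \<subseteq> E" using uv vx unfolding E_def by blast
      moreover have "card {{u,v},{v,x}} = 2" using 2 uv xv by (auto simp: doubleton_eq_iff)
      ultimately show ?thesis using f c unfolding E_def by (simp add: card_Diff_subset finite_subset)
    qed
    moreover have "{u,x} \<in> snd (contract_edge G u v)" unfolding G' using vx 2 by blast
    moreover have "\<forall>z. id (id z) = z" by simp
    ultimately show ?thesis unfolding goal2_def E_def
      by (intro exI[of _ "{u,x}"] exI[of _ id] exI[of _ "E - {{u,v},{v,x}}"]) (simp add: E_def)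
  qed
qed


lemma sw_simps: "sw u v u = v" "sw u v v = u" "x \<noteq> u \<Longrightarrow> x \<noteq> v \<Longrightarrow> sw u v x = x"
  unfolding sw_def by auto

lemma contract_low_u:
  assumes sg: "simple_graph G" and S: "Sp (snd G)" and uv: "u \<noteq> v" "{u,v} \<in> snd G"
    and d: "degree (snd G) u \<le> 2" and c: "card (snd G) \<ge> 2"
  shows "goal2 (snd G) (snd (contract_edge G u v))"
proof -
  define E where "E = snd G"
  define s where "s = sw u v"
  have inv: "\<And>z. s (s z) = z" unfolding s_def by (rule sw_inv)
  have su: "s u = v" "s v = u" "\<And>x. x \<noteq> u \<Longrightarrow> x \<noteq> v \<Longrightarrow> s x = x" unfolding s_def by (auto simp: sw_simps)
  have sfix: "\<And>X. u \<notin> X \<Longrightarrow> v \<notin> X \<Longrightarrow> s ` X = X" unfolding s_def by (rule sw_fix)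
  have f: "finite E" using simple_finite[OF sg] unfolding E_def .
  have uvE: "{u,v} \<in> E" using uv unfolding E_def by simp
  have vM: "v \<in> nbr E u" using uv unfolding nbr_def E_def by simp
  have cM: "card (nbr E u) \<le> 2" using d degree_nbr[OF sg, of u] unfolding E_def by simp
  have G': "snd (contract_edge G u v) = {e\<in>E. v \<notin> e} \<union> {{u,x} | x. {v,x} \<in> E \<and> x \<noteq> u}"
    unfolding contract_edge_def E_def by simp
  have at: "e \<in> E \<Longrightarrow> w \<in> e \<Longrightarrow> \<exists>x. x \<in> nbr E w \<and> x \<noteq> w \<and> e = {w,x}" for e w
    using edge_at_cases[OF sg] unfolding E_def by blast
  have nv: "{v,x} \<in> E \<Longrightarrow> x \<noteq> v" for x using simple_edge[OF sg, of "{v,x}"] unfolding E_def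
    by (auto simp: doubleton_eq_iff)
  consider "nbr E u = {v}" | y where "y \<noteq> v" "nbr E u = {v,y}"
    using nbr_cases[OF finite_nbr[OF f] cM vM] by blast
  then show ?thesis
  proof cases
    case 1
    have nu: "e \<in> E \<Longrightarrow> u \<in> e \<Longrightarrow> e = {u,v}" for e using at[of e u] 1 by auto
    have "snd (contract_edge G u v) = image s ` (E - {{u,v}})"
    proof (rule img_eq[OF inv])
      fix X assume "X \<in> snd (contract_edge G u v)"
      then consider "X \<in> E" "v \<notin> X" | x where "{v,x} \<in> E" "x \<noteq> u" "X = {u,x}" unfolding G' by blast
      then show "s ` X \<in> E - {{u,v}}"
      proof cases
        case 1
        then have "u \<notin> X" using nu by blast
        then show ?thesis using 1 sfix by auto
      next
        case 2
        then have "x \<noteq> v" using nv by blast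
        then show ?thesis using 2 su uv by (auto simp: doubleton_eq_iff)
      qed
    next
      fix e assume e: "e \<in> E - {{u,v}}"
      then have ue: "u \<notin> e" using nu by blast
      show "s ` e \<in> snd (contract_edge G u v)"
      proof (cases "v \<in> e")
        case False then show ?thesis using e ue sfix unfolding G' by auto
      next
        case True
        then obtain x where x: "x \<in> nbr E v" "x \<noteq> v" "e = {v,x}" using at e by blast
        then have "x \<noteq> u" using ue by blast
        then have "s ` e = {u,x}" using x su by simp
        then show ?thesis unfolding G' using x \<open>x \<noteq> u\<close> unfolding nbr_def by blast
      qed
    qed
    moreover have "card (E - {{u,v}}) + 1 = card E" using uvE f c unfolding E_def by (simp add: card_Diff_singleton)
    ultimately show ?thesis using one_less[OF f, of s "E - {{u,v}}"] inv c unfolding E_def by auto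
  next
    case 2
    have uyE: "{u,y} \<in> E" using 2 unfolding nbr_def by blast
    have yu: "y \<noteq> u" using simple_edge[OF sg, of "{u,y}"] uyE unfolding E_def by (auto simp: doubleton_eq_iff)
    have nu: "e \<in> E \<Longrightarrow> u \<in> e \<Longrightarrow> e = {u,v} \<or> e = {u,y}" for e using at[of e u] 2 by auto
    have "snd (contract_edge G u v) - {{u,y}} = image s ` (E - {{u,v},{u,y}})"
    proof (rule img_eq[OF inv])
      fix X assume X: "X \<in> snd (contract_edge G u v) - {{u,y}}"
      then consider "X \<in> E" "v \<notin> X" "X \<noteq> {u,y}" | x where "{v,x} \<in> E" "x \<noteq> u" "X = {u,x}" unfolding G' by blast
      then show "s ` X \<in> E - {{u,v},{u,y}}"
      proof cases
        case 1
        then have "u \<notin> X" using nu by blast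
        then show ?thesis using 1 sfix by auto
      next
        case 2
        then have "x \<noteq> v" using nv by blast
        then show ?thesis using 2 su uv by (auto simp: doubleton_eq_iff)
      qed
    next
      fix e assume e: "e \<in> E - {{u,v},{u,y}}"
      then have ue: "u \<notin> e" using nu by blast
      show "s ` e \<in> snd (contract_edge G u v) - {{u,y}}"
      proof (cases "v \<in> e")
        case False then show ?thesis using e ue sfix unfolding G' by auto
      next
        case True
        then obtain x where x: "x \<in> nbr E v" "x \<noteq> v" "e = {v,x}" using at e by blast
        then have xu: "x \<noteq> u" using ue by blast
        then have se: "s ` e = {u,x}" using x su by simp
        have "x \<noteq> y"
        proof
          assume "x = y"
          then have "{v,y} \<in> E" using x unfolding nbr_def by blast
          then show False using tf[OF S, of u v y] uv uyE 2 yu unfolding E_def by blast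
        qed
        then have "{u,x} \<noteq> {u,y}" using xu yu by (auto simp: doubleton_eq_iff)
        then show ?thesis unfolding G' se using x xu unfolding nbr_def by blast
      qed
    qed
    moreover have "card (E - {{u,v},{u,y}}) + 2 = card E"
    proof -
      have "{{u,v},{u,y}} \<subseteq> E" using uvE uyE by blast
      moreover have "card {{u,v},{u,y}} = 2" using 2 uv yu by (auto simp: doubleton_eq_iff)
      ultimately show ?thesis using f c unfolding E_def by (simp add: card_Diff_subset finite_subset)
    qed
    moreover have "{u,y} \<in> snd (contract_edge G u v)" unfolding G' using uyE 2 by auto
    moreover have "\<forall>z. s (s z) = z" using inv by blast
    ultimately show ?thesis unfolding goal2_def E_def
      by (intro exI[of _ "{u,y}"] exI[of _ s] exI[of _ "E - {{u,v},{u,y}}"]) (simp add: E_def)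
  qed
qed


lemma move_simple: "simple_graph G \<Longrightarrow> nimors_move G G' \<Longrightarrow> simple_graph G'"
proof -
  assume sg: "simple_graph G" and m: "nimors_move G G'"
  then consider e where "G' = delete_edge G e" | u v where "u \<noteq> v" "{u,v} \<in> snd G" "G' = contract_edge G u v"
    unfolding nimors_move_def by blast
  then show ?thesis
  proof cases
    case 1 then show ?thesis using simple_delete[OF sg] by simp
  next
    case 2 then show ?thesis using simple_contract[OF sg] by simp
  qed
qed

lemma move_nonempty: "nimors_move G G' \<Longrightarrow> snd G \<noteq> {}"
  unfolding nimors_move_def by blast

lemma key:
  assumes sg: "simple_graph G" and S: "Sp (snd G)" and c: "card (snd G) \<ge> 2" and m: "nimors_move G G'"
  shows "goal2 (snd G) (snd G')"
proof (cases "\<exists>e\<in>snd G. G' = delete_edge G e")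
  case True
  then obtain e where e: "e \<in> snd G" "G' = delete_edge G e" by blast
  have f: "finite (snd G)" using simple_finite[OF sg] .
  have "snd G' = image id ` (snd G - {e})" using e unfolding delete_edge_def by simp
  moreover have "card (snd G - {e}) + 1 = card (snd G)" using e f c by (simp add: card_Diff_singleton)
  ultimately show ?thesis using one_less[OF f, of id "snd G - {e}"] c by auto
next
  case False
  then obtain u v where uv: "u \<noteq> v" "{u,v} \<in> snd G" and G': "G' = contract_edge G u v"
    using m unfolding nimors_move_def by blast
  have "degree (snd G) u \<le> 2 \<or> degree (snd G) v \<le> 2" using S uv unfolding Sp_def by fastforce
  then show ?thesis using contract_low_u[OF sg S uv _ c] contract_low_v[OF sg S uv _ c] G' by blast
qed

lemma main: "simple_graph G \<Longrightarrow> Sp (snd G) \<Longrightarrow> P_position G \<longleftrightarrow> even (card (snd G))"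
proof (induction "card (snd G)" arbitrary: G rule: less_induct)
  case less
  have f: "finite (snd G)" using simple_finite[OF less.prems(1)] .
  show ?case
  proof (cases "even (card (snd G))")
    case True
    have "P_position G"
    proof (rule P_position.intros)
      fix G' assume m: "nimors_move G G'"
      have "card (snd G) > 0" using move_nonempty[OF m] f by (simp add: card_gt_0_iff)
      then have c: "card (snd G) \<ge> 2" using True by presburger
      have "goal2 (snd G) (snd G')" by (rule key[OF less.prems c m])
      then obtain g h F where A: "g \<in> snd G' \<and> (\<forall>z. h (h z) = z) \<and> F \<subseteq> snd G \<and>
        card F + 2 = card (snd G) \<and> snd G' - {g} = image h ` F"
        unfolding goal2_def by (elim exE) (rule that)
      then have g: "g \<in> snd G'" and inv: "\<forall>z. h (h z) = z" and F: "F \<subseteq> snd G"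
        "card F + 2 = card (snd G)" and eq: "snd G' - {g} = image h ` F" by auto
      define G'' where "G'' = delete_edge G' g"
      have m2: "nimors_move G' G''" unfolding nimors_move_def G''_def using g by blast
      have sg2: "simple_graph G''" unfolding G''_def using simple_delete move_simple[OF less.prems(1) m] by blast
      have E2: "snd G'' = image h ` F" unfolding G''_def delete_edge_def using eq by simp
      have Sp2: "Sp (snd G'')" unfolding E2 using Sp_img[of h F] Sp_sub[OF f less.prems(2) F(1)] inv by blast
      have c2: "card (snd G'') = card F" unfolding E2
        using card_image[OF inj_on_subset[OF inj_img[of h] subset_UNIV]] inv by blast
      have ev: "even (card F)" using F(2) True by presburger
      have lt: "card (snd G'') < card (snd G)" using c2 F(2) by simp
      have "P_position G''" using less.hyps[OF lt sg2 Sp2] c2 ev by simp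
      then show "\<exists>G''. nimors_move G' G'' \<and> P_position G''" using m2 by blast
    qed
    then show ?thesis using True by simp
  next
    case False
    then have "snd G \<noteq> {}" by auto
    then obtain e where e: "e \<in> snd G" by blast
    define G' where "G' = delete_edge G e"
    have m: "nimors_move G G'" unfolding nimors_move_def G'_def using e by blast
    have sg': "simple_graph G'" unfolding G'_def using simple_delete less.prems(1) by blast
    have Sp': "Sp (snd G')" unfolding G'_def delete_edge_def using Sp_sub[OF f less.prems(2)] by simp
    have "card (snd G) > 0" using e f card_gt_0_iff by blast
    then have c': "card (snd G') + 1 = card (snd G)" unfolding G'_def delete_edge_def using e f
      by (simp add: card_Diff_singleton)
    have ev: "even (card (snd G'))" using c' False by presburger
    have lt: "card (snd G') < card (snd G)" using c' by simp
    have "P_position G'" using less.hyps[OF lt sg' Sp'] ev by simp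
    then have "\<not> P_position G" using P_not_P[OF f _ m] by blast
    then show ?thesis using False by simp
  qed
qed

theorem theorem3:
  fixes G :: "'a graph"
  assumes "simple_graph G" and "property_S G"
  shows "P_position G \<longleftrightarrow> even (card (snd G))"
  using main[OF assms(1) propS_Sp[OF assms]] .

end
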